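(* Let $\widehat{G}$ be a chordal signed separable bigraph. Suppose that a vertex set $S$ minimally separates components $\widehat{H_1}$ and $\widehat{H_2}$ of $\widehat G-S$. Then $\widehat{H_1}$ or $\widehat{H_2}$ contains an edge which is a signed simplicial edge of $\widehat{G}$.
   Context: A signed graph is a finite simple graph each of whose edges is assigned a sign, positive or negative. A signed bigraph is a signed graph whose underlying graph is bipartite. A bigraph is separable if it contains an induced $2K_2$. A signed graph is positive if all its edges are positive and non-trivial if it has at least one edge. In a bigraph with bipartition $(X,Y)$, a subgraph $H$ is a biclique if every vertex of $V(H)\cap X$ is adjacent to every vertex of $V(H)\cap Y$. For an edge $uv$, $N(uv)=(N(u)\cup N(v))\setminus\{u,v\}$; $uv$ is signed simplicial if $N(uv)$ induces a positive biclique. A signed bigraph $\widehat G$ is chordal if its edges can be ordered $e_1,\dots,e_m$ so that each $e_i$ is signed simplicial in $\widehat G-\{e_1,\dots,e_{i-1}\}$ (edges deleted, vertices kept). For a vertex set $S$ and two distinct non-trivial connected components $H,H'$ of $\widehat G-S$, $S$ minimally separates $H$ and $H'$ if every vertex of $S$ has a neighbour in $H$ and a neighbour in $H'$. *)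

theory Defs
  imports Main
begin

text \<open>A signed bigraph is given by a finite vertex set V with a fixed bipartition (X,Y),
an edge set E of 2-element sets {x,y} with x in X and y in Y, and a sign function
sigma on edges (True = positive, False = negative).\<close>

definition signed_bigraph :: "'a set \<Rightarrow> 'a set \<Rightarrow> 'a set \<Rightarrow> 'a set set \<Rightarrow> bool" where
  "signed_bigraph V X Y E \<longleftrightarrow> finite V \<and> X \<inter> Y = {} \<and> X \<union> Y = V \<and>
     (\<forall>e\<in>E. \<exists>x\<in>X. \<exists>y\<in>Y. e = {x, y})"

definition nbr :: "'a set set \<Rightarrow> 'a \<Rightarrow> 'a set" where
  "nbr E v = {w. {v, w} \<in> E}"

definition edge_nbhd :: "'a set set \<Rightarrow> 'a set \<Rightarrow> 'a set" where
  "edge_nbhd E e = (\<Union>v\<in>e. nbr E v) - e"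

definition positive_biclique :: "'a set \<Rightarrow> 'a set \<Rightarrow> 'a set set \<Rightarrow> ('a set \<Rightarrow> bool) \<Rightarrow> 'a set \<Rightarrow> bool" where
  "positive_biclique X Y E sigma W \<longleftrightarrow>
     (\<forall>x\<in>W \<inter> X. \<forall>y\<in>W \<inter> Y. {x, y} \<in> E) \<and> (\<forall>e\<in>E. e \<subseteq> W \<longrightarrow> sigma e)"

definition signed_simplicial :: "'a set \<Rightarrow> 'a set \<Rightarrow> 'a set set \<Rightarrow> ('a set \<Rightarrow> bool) \<Rightarrow> 'a set \<Rightarrow> bool" where
  "signed_simplicial X Y E sigma e \<longleftrightarrow> e \<in> E \<and> positive_biclique X Y E sigma (edge_nbhd E e)"

definition chordal_signed :: "'a set \<Rightarrow> 'a set \<Rightarrow> 'a set set \<Rightarrow> ('a set \<Rightarrow> bool) \<Rightarrow> bool" where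
  "chordal_signed X Y E sigma \<longleftrightarrow>
     (\<exists>es. distinct es \<and> set es = E \<and>
        (\<forall>i<length es. signed_simplicial X Y (E - set (take i es)) sigma (es ! i)))"

definition separable :: "'a set set \<Rightarrow> bool" where
  "separable E \<longleftrightarrow> (\<exists>a b c d. distinct [a, b, c, d] \<and> {a, b} \<in> E \<and> {c, d} \<in> E \<and>
      {a, c} \<notin> E \<and> {a, d} \<notin> E \<and> {b, c} \<notin> E \<and> {b, d} \<notin> E)"

definition component_minus :: "'a set \<Rightarrow> 'a set set \<Rightarrow> 'a set \<Rightarrow> 'a set \<Rightarrow> bool" where
  "component_minus V E S H \<longleftrightarrow>
     (\<exists>v\<in>V - S. H = {w. (\<lambda>a b. {a, b} \<in> E \<and> a \<notin> S \<and> b \<notin> S)\<^sup>*\<^sup>* v w})"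

definition nontrivial_on :: "'a set set \<Rightarrow> 'a set \<Rightarrow> bool" where
  "nontrivial_on E H \<longleftrightarrow> (\<exists>e\<in>E. e \<subseteq> H)"

definition minimally_separates :: "'a set set \<Rightarrow> 'a set \<Rightarrow> 'a set \<Rightarrow> 'a set \<Rightarrow> bool" where
  "minimally_separates E S H1 H2 \<longleftrightarrow>
     (\<forall>s\<in>S. (\<exists>h\<in>H1. {s, h} \<in> E) \<and> (\<exists>h\<in>H2. {s, h} \<in> E))"

end

theory Submission
  imports Defs
begin

theorem lemma4p3:
  fixes V X Y :: "'a set" and E :: "'a set set" and sigma :: "'a set \<Rightarrow> bool"
    and S H1 H2 :: "'a set"
  assumes "signed_bigraph V X Y E"
    and "chordal_signed X Y E sigma"
    and "separable E"
    and "S \<subseteq> V"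
    and "component_minus V E S H1" and "component_minus V E S H2" and "H1 \<noteq> H2"
    and "nontrivial_on E H1" and "nontrivial_on E H2"
    and "minimally_separates E S H1 H2"
  shows "\<exists>e\<in>E. (e \<subseteq> H1 \<or> e \<subseteq> H2) \<and> signed_simplicial X Y E sigma e"
proof -
  from assms(1) have XY: "X \<inter> Y = {}" and edges: "\<forall>e\<in>E. \<exists>x\<in>X. \<exists>y\<in>Y. e = {x, y}"
    by (auto simp: signed_bigraph_def)
  have side: "(a \<in> X \<and> b \<in> Y) \<or> (a \<in> Y \<and> b \<in> X)" if "{a,b} \<in> E" for a b
    using edges that by (auto simp: doubleton_eq_iff)
  have neq: "a \<noteq> b" if "{a,b} \<in> E" for a b
    using side[OF that] XY by auto
  from assms(2) obtain es where d: "distinct es" "set es = E"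
    and simpl: "\<forall>i<length es. signed_simplicial X Y (E - set (take i es)) sigma (es!i)"
    unfolding chordal_signed_def by blast
  define R where "R = (\<lambda>a b. {a, b} \<in> E \<and> a \<notin> S \<and> b \<notin> S)"
  from assms(5) obtain v1 where v1: "v1 \<in> V - S" "H1 = {w. R\<^sup>*\<^sup>* v1 w}"
    unfolding component_minus_def R_def by blast
  from assms(6) obtain v2 where v2: "v2 \<in> V - S" "H2 = {w. R\<^sup>*\<^sup>* v2 w}"
    unfolding component_minus_def R_def by blast
  have Rsym: "R b a" if "R a b" for a b using that by (auto simp: R_def insert_commute)
  have rsym: "R\<^sup>*\<^sup>* b a" if "R\<^sup>*\<^sup>* a b" for a b
    using that
  proof (induction rule: rtranclp.induct)
    case (rtrancl_refl a) then show ?case by simp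
  next
    case (rtrancl_into_rtrancl a b c)
    then show ?case using Rsym converse_rtranclp_into_rtranclp by metis
  qed
  have notS: "b \<notin> S" if "R\<^sup>*\<^sup>* a b" "a \<notin> S" for a b
    using that by (induction rule: rtranclp.induct) (auto simp: R_def)
  have H1S: "H1 \<inter> S = {}" using v1 notS by auto
  have H2S: "H2 \<inter> S = {}" using v2 notS by auto
  have close1: "w \<in> H1" if "h \<in> H1" "{h,w} \<in> E" "w \<notin> S" for h w
  proof -
    have "R h w" using that H1S by (auto simp: R_def)
    then show ?thesis using that v1 by (auto intro: rtranclp.rtrancl_into_rtrancl)
  qed
  have close2: "w \<in> H2" if "h \<in> H2" "{h,w} \<in> E" "w \<notin> S" for h w
  proof -
    have "R h w" using that H2S by (auto simp: R_def)
    then show ?thesis using that v2 by (auto intro: rtranclp.rtrancl_into_rtrancl)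
  qed
  have disj: False if "w \<in> H1" "w \<in> H2" for w
  proof -
    have a: "R\<^sup>*\<^sup>* v1 w" "R\<^sup>*\<^sup>* v2 w" using that v1 v2 by auto
    have "R\<^sup>*\<^sup>* v1 v2" using a rsym rtranclp_trans by metis
    moreover have "R\<^sup>*\<^sup>* v2 v1" using a rsym rtranclp_trans by metis
    ultimately have "H1 = H2" unfolding v1(2) v2(2)
      by (auto intro: rtranclp_trans[of R v1 v2] rtranclp_trans[of R v2 v1])
    then show False using assms(7) by simp
  qed
  have cross: False if "a \<in> H1" "b \<in> H2" "{a,b} \<in> E" for a b
    using close1[OF that(1) that(3)] that H2S disj by blast
  have nbr1: "\<exists>h'\<in>H1. {h,h'} \<in> E" if "h \<in> H1" for h
  proof -
    from assms(8) obtain e where e: "e \<in> E" "e \<subseteq> H1" unfolding nontrivial_on_def by blast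
    then obtain x y where xy: "e = {x,y}" using edges by blast
    show ?thesis
    proof (cases "h = x")
      case True
      have "y \<in> H1" "{h,y} \<in> E" using e xy True by auto
      then show ?thesis by blast
    next
      case False
      have a: "R\<^sup>*\<^sup>* v1 h" "R\<^sup>*\<^sup>* v1 x" using that e xy v1 by auto
      have "R\<^sup>*\<^sup>* h x" using a by (meson rsym rtranclp_trans)
      then obtain z where z: "R h z" "R\<^sup>*\<^sup>* z x" using False by (metis converse_rtranclpE)
      have "R\<^sup>*\<^sup>* v1 z" using a(1) z(1) by (rule rtranclp.rtrancl_into_rtrancl)
      then have "z \<in> H1" using v1 by simp
      moreover have "{h,z} \<in> E" using z(1) unfolding R_def by simp
      ultimately show ?thesis by blast
    qed
  qed
  have nbr2: "\<exists>h'\<in>H2. {h,h'} \<in> E" if "h \<in> H2" for h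
  proof -
    from assms(9) obtain e where e: "e \<in> E" "e \<subseteq> H2" unfolding nontrivial_on_def by blast
    then obtain x y where xy: "e = {x,y}" using edges by blast
    show ?thesis
    proof (cases "h = x")
      case True
      have "y \<in> H2" "{h,y} \<in> E" using e xy True by auto
      then show ?thesis by blast
    next
      case False
      have a: "R\<^sup>*\<^sup>* v2 h" "R\<^sup>*\<^sup>* v2 x" using that e xy v2 by auto
      have "R\<^sup>*\<^sup>* h x" using a by (meson rsym rtranclp_trans)
      then obtain z where z: "R h z" "R\<^sup>*\<^sup>* z x" using False by (metis converse_rtranclpE)
      have "R\<^sup>*\<^sup>* v2 z" using a(1) z(1) by (rule rtranclp.rtrancl_into_rtrancl)
      then have "z \<in> H2" using v2 by simp
      moreover have "{h,z} \<in> E" using z(1) unfolding R_def by simp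
      ultimately show ?thesis by blast
    qed
  qed
  define P where "P = (\<lambda>j. j < length es \<and> es!j \<inter> (H1 \<union> H2) \<noteq> {})"
  have exP: "\<exists>j. P j"
  proof -
    from assms(8) obtain e where e: "e \<in> E" "e \<subseteq> H1" unfolding nontrivial_on_def by blast
    then obtain x y where xy: "e = {x,y}" using edges by blast
    from e d obtain j where "j < length es" "es!j = e" by (metis in_set_conv_nth)
    then show ?thesis using xy e unfolding P_def by blast
  qed
  define i where "i = (LEAST j. P j)"
  have Pi: "P i" unfolding i_def using exP by (metis LeastI_ex)
  have T: "f \<inter> (H1 \<union> H2) = {}" if "f \<in> set (take i es)" for f
  proof -
    from that obtain j where j: "j < length (take i es)" "take i es ! j = f"
      by (metis in_set_conv_nth)
    then have "j < i" "j < length es" "es ! j = f" by auto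
    then show ?thesis using not_less_Least[of j P] unfolding i_def P_def by blast
  qed
  have Ssub: False if "j < i" "es!j \<subseteq> S" for j
  proof -
    have jl: "j < length es" using that Pi unfolding P_def by simp
    have ej: "es!j \<in> E" using jl d nth_mem by blast
    then obtain x y where xy: "x \<in> X" "y \<in> Y" "es!j = {x,y}" using edges by blast
    have xS: "x \<in> S" "y \<in> S" using xy that by auto
    from assms(10) xS obtain y1 where y1: "y1 \<in> H1" "{x,y1} \<in> E"
      unfolding minimally_separates_def by blast
    from assms(10) xS obtain x2 where x2: "x2 \<in> H2" "{y,x2} \<in> E"
      unfolding minimally_separates_def by blast
    have y1Y: "y1 \<in> Y" using side[OF y1(2)] xy XY by auto
    have x2X: "x2 \<in> X" using side[OF x2(2)] xy XY by auto
    let ?Ej = "E - set (take j es)"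
    have sub: "set (take j es) \<subseteq> set (take i es)" using that(1)
      by (simp add: set_take_subset_set_take)
    have "signed_simplicial X Y ?Ej sigma (es!j)" using simpl jl by blast
    then have pb: "positive_biclique X Y ?Ej sigma (edge_nbhd ?Ej {x,y})"
      unfolding signed_simplicial_def xy by simp
    have "{x,y1} \<notin> set (take i es)" using T y1 by blast
    then have "{x,y1} \<in> ?Ej" using y1 sub by blast
    then have "y1 \<in> edge_nbhd ?Ej {x,y}" using y1 H1S xS
      unfolding edge_nbhd_def nbr_def by blast
    moreover have "{y,x2} \<notin> set (take i es)" using T x2 by blast
    then have "{y,x2} \<in> ?Ej" using x2 sub by blast
    then have "x2 \<in> edge_nbhd ?Ej {x,y}" using x2 H2S xS
      unfolding edge_nbhd_def nbr_def by blast
    ultimately have "{x2,y1} \<in> ?Ej" using pb y1Y x2X unfolding positive_biclique_def by blast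
    then show False using cross[OF y1(1) x2(1)] by (auto simp: insert_commute)
  qed
  have il: "i < length es" and meet: "es!i \<inter> (H1 \<union> H2) \<noteq> {}" using Pi unfolding P_def by auto
  define e where "e = es!i"
  define Ei where "Ei = E - set (take i es)"
  have EiE: "Ei \<subseteq> E" unfolding Ei_def by blast
  have eE: "e \<in> E" unfolding e_def using il d nth_mem by blast
  have "signed_simplicial X Y Ei sigma e" using simpl il unfolding e_def Ei_def by blast
  then have pb: "positive_biclique X Y Ei sigma (edge_nbhd Ei e)"
    unfolding signed_simplicial_def by simp
  have inEi: "f \<in> Ei" if "f \<in> E" "z \<in> f" "z \<in> H1 \<union> H2" for f z
    using that T unfolding Ei_def by blast
  have keyF: False if "u \<in> A" "w \<in> S" "e = {u,w}" "h' \<in> A" "{u,h'} \<in> E" "h2 \<in> B"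
    "{w,h2} \<in> E" "A \<inter> S = {}" "B \<inter> S = {}" "A \<inter> B = {}" "A \<subseteq> H1 \<union> H2"
    "B \<subseteq> H1 \<union> H2" "\<And>a b. a \<in> A \<Longrightarrow> b \<in> B \<Longrightarrow> {a,b} \<in> E \<Longrightarrow> False"
  for A B u w h' h2
  proof -
    have e1: "{u,h'} \<in> Ei" using inEi[OF that(5), of u] that by blast
    have e2: "{w,h2} \<in> Ei" using inEi[OF that(7), of h2] that by blast
    have "h' \<noteq> u" using neq[OF that(5)] by simp
    moreover have "h' \<noteq> w" using that by blast
    ultimately have n1: "h' \<in> edge_nbhd Ei e" using e1 that(3)
      unfolding edge_nbhd_def nbr_def by blast
    have "h2 \<noteq> u" "h2 \<noteq> w" using that by blast+
    then have n2: "h2 \<in> edge_nbhd Ei e" using e2 that(3)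
      unfolding edge_nbhd_def nbr_def by blast
    have s1: "(u \<in> X \<and> w \<in> Y) \<or> (u \<in> Y \<and> w \<in> X)" using side eE that(3) by blast
    have s2: "(u \<in> X \<and> h' \<in> Y) \<or> (u \<in> Y \<and> h' \<in> X)" using side that(5) by blast
    have s3: "(w \<in> X \<and> h2 \<in> Y) \<or> (w \<in> Y \<and> h2 \<in> X)" using side that(7) by blast
    have "(h' \<in> X \<and> h2 \<in> Y) \<or> (h' \<in> Y \<and> h2 \<in> X)" using s1 s2 s3 XY by blast
    then have "{h',h2} \<in> Ei \<or> {h2,h'} \<in> Ei" using pb n1 n2 unfolding positive_biclique_def by blast
    then have "{h',h2} \<in> E" using EiE by (auto simp: insert_commute)
    then show False using that by blast
  qed
  have inside: "e \<subseteq> H1 \<or> e \<subseteq> H2"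
  proof -
    obtain x y where xy: "e = {x,y}" using edges eE by blast
    from meet obtain u where u: "u \<in> e" "u \<in> H1 \<union> H2" unfolding e_def by blast
    obtain w where w: "e = {u,w}" using u(1) xy by (auto simp: insert_commute)
    have uwE: "{u,w} \<in> E" using eE w by simp
    show ?thesis
    proof (cases "u \<in> H1")
      case True
      show ?thesis
      proof (cases "w \<in> S")
        case False
        then show ?thesis using close1[OF True uwE] True w by blast
      next
        case wS: True
        obtain h' where h': "h' \<in> H1" "{u,h'} \<in> E" using nbr1[OF True] by blast
        obtain h2 where h2: "h2 \<in> H2" "{w,h2} \<in> E" using assms(10) wS
          unfolding minimally_separates_def by blast
        have "False"
          by (rule keyF[of u H1 w h' h2 H2]) (use True wS w h' h2 H1S H2S disj cross in auto)
        then show ?thesis ..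
      qed
    next
      case False
      then have uH2: "u \<in> H2" using u by blast
      show ?thesis
      proof (cases "w \<in> S")
        case False
        then show ?thesis using close2[OF uH2 uwE] uH2 w by blast
      next
        case wS: True
        obtain h' where h': "h' \<in> H2" "{u,h'} \<in> E" using nbr2[OF uH2] by blast
        obtain h2 where h2: "h2 \<in> H1" "{w,h2} \<in> E" using assms(10) wS
          unfolding minimally_separates_def by blast
        have cross': False if "a \<in> H2" "b \<in> H1" "{a,b} \<in> E" for a b
          using cross[OF that(2) that(1)] that(3) by (simp add: insert_commute)
        have "False"
          by (rule keyF[of u H2 w h' h2 H1]) (use uH2 wS w h' h2 H1S H2S disj cross' in auto)
        then show ?thesis ..
      qed
    qed
  qed
  have good: "signed_simplicial X Y E sigma e"
    if H: "e \<subseteq> H" "H \<inter> S = {}" "H \<subseteq> H1 \<union> H2" "\<And>h w. h \<in> H \<Longrightarrow> {h,w} \<in> E \<Longrightarrow> w \<notin> S \<Longrightarrow> w \<in> H"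
    for H
  proof -
    have nbv: "nbr E v = nbr Ei v" if "v \<in> e" for v
    proof -
      have "{v,z} \<in> Ei" if "{v,z} \<in> E" for z
        using inEi[OF that, of v] \<open>v \<in> e\<close> H by blast
      then show ?thesis using EiE unfolding nbr_def by blast
    qed
    have nb: "edge_nbhd E e = edge_nbhd Ei e" unfolding edge_nbhd_def using nbv by simp
    have Wsub: "edge_nbhd E e \<subseteq> H \<union> S"
    proof
      fix z assume "z \<in> edge_nbhd E e"
      then obtain v where "v \<in> e" "{v,z} \<in> E" unfolding edge_nbhd_def nbr_def by blast
      then show "z \<in> H \<union> S" using H by blast
    qed
    have part1: "\<forall>x\<in>edge_nbhd E e \<inter> X. \<forall>y\<in>edge_nbhd E e \<inter> Y. {x, y} \<in> E"
      using pb EiE unfolding nb positive_biclique_def by blast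
    have part2: "sigma f" if "f \<in> E" "f \<subseteq> edge_nbhd E e" for f
    proof -
      have "f \<in> Ei"
      proof (rule ccontr)
        assume "f \<notin> Ei"
        then have "f \<in> set (take i es)" using that unfolding Ei_def by blast
        then obtain j where j: "j < length (take i es)" "take i es ! j = f"
          by (metis in_set_conv_nth)
        then have ji: "j < i" "es ! j = f" by auto
        have "f \<inter> (H1 \<union> H2) = {}" using T \<open>f \<in> set (take i es)\<close> by blast
        then have "f \<subseteq> S" using that(2) Wsub H(3) by blast
        then show False using Ssub[OF ji(1)] ji(2) by simp
      qed
      then show ?thesis using pb that(2) unfolding nb positive_biclique_def by blast
    qed
    show ?thesis unfolding signed_simplicial_def positive_biclique_def
      using eE part1 part2 by blast
  qed
  show ?thesis
  proof (cases "e \<subseteq> H1")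
    case True
    have "signed_simplicial X Y E sigma e" by (rule good[of H1]) (use True H1S close1 in auto)
    then show ?thesis using eE True by blast
  next
    case False
    then have e2: "e \<subseteq> H2" using inside by blast
    have "signed_simplicial X Y E sigma e" by (rule good[of H2]) (use e2 H2S close2 in auto)
    then show ?thesis using eE e2 by blast
  qed
qed
end
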